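(* Let $\varphi(z)=\dfrac{1+z}{\cos z}$ and $f(z)=z+\sum_{n=2}^\infty a_nz^n\in\mathcal{A}$. Then $f\in\mathcal{S}^*_{nc}$ if and only if $$\sum_{n=2}^\infty\bigl(\varphi(e^{i\theta})-n\bigr)a_nz^{n-1}+\varphi(e^{i\theta})\ne1\qquad\text{for all } z\in\mathbb{D},\ \theta\in[-\pi,\pi].$$
   Context: $\mathbb{D}$ is the open unit disk. $\mathcal{A}$ is the class of analytic $f$ on $\mathbb{D}$ with $f(0)=0$, $f'(0)=1$. For analytic $f,g$ on $\mathbb{D}$, $f\prec g$ means $f=g\circ\omega$ for some analytic $\omega:\mathbb{D}\to\mathbb{D}$ with $\omega(0)=0$. $\mathcal{S}^*_{nc}=\{f\in\mathcal{A}: zf'(z)/f(z)\prec (1+z)/\cos z\}$. *)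

theory Defs
  imports "HOL-Complex_Analysis.Complex_Analysis"
begin

definition phi_nc :: "complex \<Rightarrow> complex" where
  "phi_nc z = (1 + z) / cos z"

definition classA :: "(complex \<Rightarrow> complex) set" where
  "classA = {f. f holomorphic_on ball 0 1 \<and> f 0 = 0 \<and> deriv f 0 = 1}"

definition subordinate :: "(complex \<Rightarrow> complex) \<Rightarrow> (complex \<Rightarrow> complex) \<Rightarrow> bool" where
  "subordinate p g \<longleftrightarrow> (\<exists>w. w holomorphic_on ball 0 1 \<and> w ` ball 0 1 \<subseteq> ball 0 1 \<and> w 0 = 0
      \<and> (\<forall>z\<in>ball 0 1. p z = g (w z)))"

text \<open>z f'(z)/f(z), with its removable value 1 at z = 0 (since f(0)=0, f'(0)=1).\<close>
definition starlike_quot :: "(complex \<Rightarrow> complex) \<Rightarrow> complex \<Rightarrow> complex" where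
  "starlike_quot f z = (if z = 0 then 1 else z * deriv f z / f z)"

definition S_nc :: "(complex \<Rightarrow> complex) set" where
  "S_nc = {f \<in> classA. subordinate (starlike_quot f) phi_nc}"

end

theory Submission
  imports Defs
begin


fun evalp :: "real list \<Rightarrow> complex \<Rightarrow> complex" where
  "evalp [] z = 0"
| "evalp (a#p) z = of_real a + z * evalp p z"

lemma evalp_sum: "evalp p z = (\<Sum>j<length p. of_real (p!j) * z^j)"
proof (induction p)
  case Nil then show ?case by simp
next
  case (Cons a p)
  show ?case
    by (simp add: Cons sum.lessThan_Suc_shift sum_distrib_left algebra_simps del: sum.lessThan_Suc)
qed

lemma norm_evalp_le: "cmod z \<le> 1 \<Longrightarrow> cmod (evalp p z) \<le> sum_list (map abs p)"
proof (induction p)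
  case Nil then show ?case by simp
next
  case (Cons a p)
  have "cmod (evalp (a#p) z) \<le> cmod (of_real a) + cmod z * cmod (evalp p z)"
    by (simp add: norm_triangle_le norm_mult)
  also have "\<dots> \<le> \<bar>a\<bar> + 1 * sum_list (map abs p)"
    using Cons by (intro add_mono mult_mono) auto
  finally show ?case by simp
qed

fun dot :: "real list \<Rightarrow> real list \<Rightarrow> real" where
  "dot (a#as) (b#bs) = a*b + dot as bs"
| "dot _ _ = 0"

lemma dot_sum: "dot p q = (\<Sum>i<min (length p) (length q). p!i * q!i)"
proof (induction p arbitrary: q)
  case Nil then show ?case by simp
next
  case (Cons a p)
  then show ?case
    by (cases q) (simp_all add: sum.lessThan_Suc_shift del: sum.lessThan_Suc)
qed

definition crr :: "real list \<Rightarrow> real list \<Rightarrow> nat \<Rightarrow> real" where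
  "crr p q m = (if m=0 then dot p q else dot (drop m p) q + dot p (drop m q))"

definition gmc :: "real list \<Rightarrow> real list \<Rightarrow> nat \<Rightarrow> real" where
 "gmc p q m = (\<Sum>j<length p. \<Sum>k<length q. if (j - k) + (k - j) = m then p!j * q!k else 0)"

lemma shift_sum:
  "(\<Sum>j<length p. \<Sum>k<length q. if j = k + m then p!j * q!k else 0) = dot (drop m p) q"
proof -
  have "(\<Sum>j<length p. \<Sum>k<length q. if j = k + m then p!j * q!k else 0)
      = (\<Sum>k<length q. \<Sum>j<length p. if j = k + m then p!j * q!k else 0)"
    by (rule sum.swap)
  also have "\<dots> = (\<Sum>k<length q. if k + m < length p then p!(k+m) * q!k else 0)"
    by (intro sum.cong refl) (simp add: sum.delta' if_distrib cong: if_cong)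
  also have "\<dots> = (\<Sum>k\<in>{..<min (length p - m) (length q)}. p!(k+m) * q!k)"
    by (rule sum.mono_neutral_cong_right) auto
  also have "\<dots> = dot (drop m p) q"
    by (simp add: dot_sum) (intro sum.cong refl; auto simp: nth_drop add.commute)
  finally show ?thesis .
qed

lemma shift_sum2:
  "(\<Sum>j<length p. \<Sum>k<length q. if k = j + m then p!j * q!k else 0) = dot p (drop m q)"
proof -
  have "(\<Sum>j<length p. \<Sum>k<length q. if k = j + m then p!j * q!k else 0)
      = (\<Sum>j<length p. \<Sum>k<length q. if k = j + m then q!k * p!j else 0)"
    by (intro sum.cong refl) (auto simp: mult.commute)
  also have "\<dots> = dot (drop m q) p"
    by (subst sum.swap) (rule shift_sum)
  also have "\<dots> = dot p (drop m q)"
    by (simp add: dot_sum mult.commute min.commute)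
  finally show ?thesis .
qed

lemma gmc_cor: "gmc p q m = crr p q m"
proof (cases "m = 0")
  case True
  have "gmc p q m = (\<Sum>j<length p. \<Sum>k<length q. if j = k + 0 then p!j * q!k else 0)"
    unfolding gmc_def True by (intro sum.cong refl) auto
  then show ?thesis using True shift_sum[where m=0 and p=p and q=q] by (simp add: crr_def)
next
  case False
  have "gmc p q m = (\<Sum>j<length p. \<Sum>k<length q. (if j = k + m then p!j * q!k else 0)
          + (if k = j + m then p!j * q!k else 0))"
    unfolding gmc_def using False by (intro sum.cong refl) auto
  also have "\<dots> = (\<Sum>j<length p. \<Sum>k<length q. (if j = k + m then p!j * q!k else 0))
          + (\<Sum>j<length p. \<Sum>k<length q. (if k = j + m then p!j * q!k else 0))"
    by (simp only: sum.distrib)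
  also have "\<dots> = dot (drop m p) q + dot p (drop m q)"
    by (simp only: shift_sum shift_sum2)
  finally show ?thesis using False by (simp add: crr_def)
qed

lemma Re_pow_cnj:
  assumes "cmod z = 1"
  shows "Re (z^j * cnj z^k) = Re (z^((j - k) + (k - j)))"
proof -
  have zz: "z * cnj z = 1"
    using assms complex_norm_square[of z] by simp
  show ?thesis
  proof (cases "k \<le> j")
    case True
    then have "z^j * cnj z^k = z^(j-k) * (z * cnj z)^k"
      by (simp add: power_mult_distrib power_add[symmetric])
    then show ?thesis using True zz by simp
  next
    case False
    then have "z^j * cnj z^k = cnj z^(k-j) * (z * cnj z)^j"
      by (simp add: power_mult_distrib power_add[symmetric] mult.commute mult.left_commute)
    then have "z^j * cnj z^k = cnj (z^(k-j))" using zz by simp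
    then have "Re (z^j * cnj z^k) = Re (z^(k-j))" by (simp only: complex_cnj_power[symmetric] cnj.sel)
    then show ?thesis using False by simp
  qed
qed

lemma Re_evalp_cnj:
  assumes "cmod z = 1" "length p \<le> R" "length q \<le> R"
  shows "Re (evalp p z * cnj (evalp q z)) = (\<Sum>m<R. crr p q m * Re (z^m))"
proof -
  have "evalp p z * cnj (evalp q z)
      = (\<Sum>j<length p. \<Sum>k<length q. of_real (p!j * q!k) * (z^j * cnj z^k))"
    by (simp add: evalp_sum sum_distrib_left sum_distrib_right mult_ac) (rule sum.swap)
  then have "Re (evalp p z * cnj (evalp q z))
      = (\<Sum>j<length p. \<Sum>k<length q. p!j * q!k * Re (z^j * cnj z^k))"
    by (simp add: Re_sum)
  also have "\<dots> = (\<Sum>j<length p. \<Sum>k<length q. p!j * q!k * Re (z^((j - k) + (k - j))))"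
    using Re_pow_cnj[OF assms(1)] by simp
  also have "\<dots> = (\<Sum>j<length p. \<Sum>k<length q. \<Sum>m<R.
                   if (j - k) + (k - j) = m then p!j * q!k * Re (z^m) else 0)"
  proof (intro sum.cong refl)
    fix j k assume "j \<in> {..<length p}" "k \<in> {..<length q}"
    then have "(j - k) + (k - j) \<in> {..<R}" using assms by auto
    then show "p!j * q!k * Re (z^((j - k) + (k - j))) = (\<Sum>m<R.
                   if (j - k) + (k - j) = m then p!j * q!k * Re (z^m) else 0)"
      by (simp add: sum.delta)
  qed
  also have "\<dots> = (\<Sum>m<R. \<Sum>j<length p. \<Sum>k<length q.
                   if (j - k) + (k - j) = m then p!j * q!k * Re (z^m) else 0)"
    apply (subst sum.swap)
    apply (rule sum.swap)
    done
  also have "\<dots> = (\<Sum>m<R. gmc p q m * Re (z^m))"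
    unfolding gmc_def sum_distrib_right by (auto intro!: sum.cong)
  finally show ?thesis by (simp add: gmc_cor)
qed



definition "PP = [1, 1, 1/2, -1/6, -1/8, 1/120, 1/144, -1/5040, -1/5760::real]"
definition "QQ = [1, 0, -1, 0, 1/3, 0, -2/45, 0, 1/315, 0, -2/14175, 0, 2/467775::real]"
definition "HH = [3069935/1073741824, 534739/268435456, -18584615/536870912, -25988189/1073741824, 182683341/1073741824, 56401803/536870912, -85931497/536870912, 179954749/1073741824, 550167553/1073741824::real]"


lemma cc_vals: "cos_coeff 0 = 1" "cos_coeff 1 = 0" "cos_coeff 2 = -1/2" "cos_coeff 3 = 0"
  "cos_coeff 4 = 1/24" "cos_coeff 5 = 0" "cos_coeff 6 = -1/720" "cos_coeff 7 = 0" "cos_coeff 8 = 1/40320"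
  "cos_coeff 9 = 0" "cos_coeff 10 = -1/3628800" "cos_coeff 11 = 0" "cos_coeff 12 = 1/479001600"
  by (simp_all add: cos_coeff_def fact_numeral)

lemma sc_vals: "sin_coeff 0 = 0" "sin_coeff 1 = 1" "sin_coeff 2 = 0" "sin_coeff 3 = -1/6"
  "sin_coeff 4 = 0" "sin_coeff 5 = 1/120" "sin_coeff 6 = 0" "sin_coeff 7 = -1/5040" "sin_coeff 8 = 0"
  by (simp_all add: sin_coeff_def fact_numeral)

lemma cs_suc0: "cos_coeff (Suc 0) = 0" "sin_coeff (Suc 0) = 1"
  by (simp_all add: cos_coeff_def sin_coeff_def)

lemma evalp_PP: "evalp PP z = (\<Sum>k\<le>8. of_real(cos_coeff k) * z^k) + (1+z) * (\<Sum>k\<le>8. of_real(sin_coeff k) * z^k)"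
  by (simp add: atMost_nat_numeral cc_vals sc_vals cs_suc0 PP_def) (simp add: algebra_simps power_numeral_reduce add_divide_distrib)

lemma evalp_QQ: "evalp QQ z = (1 + (\<Sum>k\<le>12. of_real(cos_coeff k) * (2*z)^k))/2"
  by (simp add: atMost_nat_numeral cc_vals cs_suc0 QQ_def) (simp add: algebra_simps power_numeral_reduce add_divide_distrib)

lemma numeric_check:
  "(crr PP QQ 0 - crr HH HH 0) - sum_list (map (\<lambda>m. \<bar>crr PP QQ (Suc m) - crr HH HH (Suc m)\<bar>) [0..<21]) \<ge> 997/10000"
  by (simp add: crr_def PP_def QQ_def HH_def upt_rec)

lemma crr_lb:
  assumes "cmod z = 1"
  shows "Re (evalp PP z * cnj (evalp QQ z)) \<ge> 997/10000"
proof -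
  define c where "c m = crr PP QQ m - crr HH HH m" for m
  have A: "Re (evalp PP z * cnj (evalp QQ z)) = (\<Sum>m<22. crr PP QQ m * Re (z^m))"
    by (rule Re_evalp_cnj[OF assms]) (simp_all add: PP_def QQ_def)
  have B: "Re (evalp HH z * cnj (evalp HH z)) = (\<Sum>m<22. crr HH HH m * Re (z^m))"
    by (rule Re_evalp_cnj[OF assms]) (simp_all add: HH_def)
  have C: "Re (evalp HH z * cnj (evalp HH z)) \<ge> 0"
    by (simp add: complex_mult_cnj)
  have D: "Re (evalp PP z * cnj (evalp QQ z)) = Re (evalp HH z * cnj (evalp HH z)) + (\<Sum>m<22. c m * Re (z^m))"
    unfolding A B c_def by (simp add: left_diff_distrib sum_subtractf)
  have "(\<Sum>m<22. c m * Re (z^m)) = (\<Sum>m<Suc 21. c m * Re (z^m))" by simp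
  also have "\<dots> = c 0 + (\<Sum>m<21. c (Suc m) * Re (z^Suc m))"
    by (subst sum.lessThan_Suc_shift) simp
  also have "\<dots> \<ge> c 0 + (\<Sum>m<21. - \<bar>c (Suc m)\<bar>)"
  proof -
    have "c (Suc m) * Re (z^Suc m) \<ge> - \<bar>c (Suc m)\<bar>" for m
    proof -
      have "cmod (z^Suc m) = 1" using assms by (simp only: norm_power) simp
      then have "\<bar>Re (z^Suc m)\<bar> \<le> 1"
        by (metis abs_Re_le_cmod)
      then have "\<bar>c (Suc m) * Re (z^Suc m)\<bar> \<le> \<bar>c (Suc m)\<bar>"
        by (simp add: abs_mult mult_left_le)
      then show ?thesis by linarith
    qed
    then show ?thesis by (intro add_left_mono sum_mono) auto
  qed
  finally have E: "(\<Sum>m<22. c m * Re (z^m)) \<ge> c 0 - (\<Sum>m<21. \<bar>c (Suc m)\<bar>)"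
    by (simp add: sum_negf)
  have "(\<Sum>m<21. \<bar>c (Suc m)\<bar>) = sum_list (map (\<lambda>m. \<bar>c (Suc m)\<bar>) [0..<21])"
    by (simp add: interv_sum_list_conv_sum_set_nat atLeast0LessThan)
  then have F: "c 0 - (\<Sum>m<21. \<bar>c (Suc m)\<bar>) \<ge> 997/10000"
    using numeric_check by (simp add: c_def)
  show ?thesis using C D E F by linarith
qed



definition NN :: "complex \<Rightarrow> complex" where "NN z = cos z + (1+z) * sin z"
definition DD :: "complex \<Rightarrow> complex" where "DD z = (cos z)^2"
definition dphi :: "complex \<Rightarrow> complex" where "dphi z = NN z / DD z"

lemma exp_Im_le3: "cmod z \<le> 1 \<Longrightarrow> exp \<bar>Im z\<bar> \<le> 3"
proof -
  assume "cmod z \<le> 1"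
  then have "\<bar>Im z\<bar> \<le> 1" using abs_Im_le_cmod[of z] by linarith
  then have "exp \<bar>Im z\<bar> \<le> exp 1" by simp
  then show ?thesis using exp_le by linarith
qed

lemma circle_bounds:
  assumes z: "cmod z = 1"
  shows "Re (NN z * cnj (DD z)) \<ge> 9/100" "cmod (DD z) \<le> 5/2"
proof -
  define Pc where "Pc = (\<Sum>k\<le>8. of_real(cos_coeff k) * z^k)"
  define Ps where "Ps = (\<Sum>k\<le>8. of_real(sin_coeff k) * z^k)"
  define Pc2 where "Pc2 = (\<Sum>k\<le>12. of_real(cos_coeff k) * (2*z)^k)"
  have f8: "fact 8 = (40320::real)" and f12: "fact 12 = (479001600::real)"
    by (simp_all add: fact_numeral)
  have ec: "cmod (cos z - Pc) \<le> 3/40320"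
  proof -
    have "cmod (cos z - Pc) \<le> exp \<bar>Im z\<bar> * cmod z ^ Suc 8 / fact 8"
      unfolding Pc_def by (rule Taylor_cos)
    also have "\<dots> \<le> 3 / 40320" using exp_Im_le3[of z] z by (simp add: f8)
    finally show ?thesis .
  qed
  have es: "cmod (sin z - Ps) \<le> 3/40320"
  proof -
    have "cmod (sin z - Ps) \<le> exp \<bar>Im z\<bar> * cmod z ^ Suc 8 / fact 8"
      unfolding Ps_def by (rule Taylor_sin)
    also have "\<dots> \<le> 3 / 40320" using exp_Im_le3[of z] z by (simp add: f8)
    finally show ?thesis .
  qed
  have ec2: "cmod (cos (2*z) - Pc2) \<le> 9 * 8192 / 479001600"
  proof -
    have "cmod (cos (2*z) - Pc2) \<le> exp \<bar>Im (2*z)\<bar> * cmod (2*z) ^ Suc 12 / fact 12"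
      unfolding Pc2_def by (rule Taylor_cos)
    also have "\<dots> = exp \<bar>Im (2*z)\<bar> * 8192 / 479001600"
      using z by (simp add: f12 norm_mult)
    also have "\<dots> \<le> 9 * 8192 / 479001600"
    proof -
      have "\<bar>Im (2*z)\<bar> \<le> 1 + 1" using abs_Im_le_cmod[of z] z by simp
      then have "exp \<bar>Im (2*z)\<bar> \<le> exp (1 + 1)" by simp
      also have "\<dots> = exp 1 * exp 1" by (rule exp_add)
      also have "\<dots> \<le> 3 * 3" using exp_le by (intro mult_mono) auto
      finally show ?thesis by simp
    qed
    finally show ?thesis .
  qed
  have Np: "evalp PP z = Pc + (1+z) * Ps" unfolding Pc_def Ps_def by (rule evalp_PP)
  have Dp: "evalp QQ z = (1 + Pc2)/2" unfolding Pc2_def by (rule evalp_QQ)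
  have DDc: "DD z = (1 + cos (2*z))/2"
    unfolding DD_def cos_double_cos by simp
  have eN: "cmod (NN z - evalp PP z) \<le> 9/40320"
  proof -
    have "NN z - evalp PP z = (cos z - Pc) + (1+z) * (sin z - Ps)"
      unfolding NN_def Np by (simp add: algebra_simps)
    also have "cmod \<dots> \<le> cmod (cos z - Pc) + cmod (1+z) * cmod (sin z - Ps)"
      by (metis norm_mult norm_triangle_ineq)
    also have "\<dots> \<le> 3/40320 + 2 * (3/40320)"
    proof -
      have "cmod (1+z) \<le> 2" using norm_triangle_ineq[of 1 z] z by simp
      then show ?thesis using ec es by (intro add_mono mult_mono) auto
    qed
    finally show ?thesis by simp
  qed
  have eD: "cmod (DD z - evalp QQ z) \<le> 9 * 8192 / 958003200"
  proof -
    have e: "DD z - evalp QQ z = (cos (2*z) - Pc2) / 2"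
      unfolding DDc Dp by (simp add: field_simps)
    have "cmod (DD z - evalp QQ z) = cmod (cos (2*z) - Pc2) / 2"
      unfolding e by (simp add: norm_divide)
    then show ?thesis using ec2 by simp
  qed
  have sQ: "sum_list (map abs QQ) \<le> 239/100"
    by (simp add: QQ_def)
  have sP: "sum_list (map abs PP) \<le> 3"
    by (simp add: PP_def)
  have bQ: "cmod (evalp QQ z) \<le> 239/100"
    using norm_evalp_le[of z QQ] z sQ by simp
  have bP: "cmod (evalp PP z) \<le> 3"
    using norm_evalp_le[of z PP] z sP by simp
  have bD: "cmod (DD z) \<le> 239/100 + 9 * 8192 / 958003200"
    using norm_triangle_ineq[of "DD z - evalp QQ z" "evalp QQ z"] eD bQ by simp
  then show "cmod (DD z) \<le> 5/2" by simp
  have split: "NN z * cnj (DD z) = evalp PP z * cnj (evalp QQ z)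
      + (NN z - evalp PP z) * cnj (DD z) + evalp PP z * cnj (DD z - evalp QQ z)"
    by (simp add: algebra_simps)
  have t1: "\<bar>Re ((NN z - evalp PP z) * cnj (DD z))\<bar> \<le> 6/10000"
  proof -
    have "\<bar>Re ((NN z - evalp PP z) * cnj (DD z))\<bar> \<le> cmod (NN z - evalp PP z) * cmod (DD z)"
      by (metis abs_Re_le_cmod complex_mod_cnj norm_mult)
    also have "\<dots> \<le> 9/40320 * (239/100 + 9 * 8192 / 958003200)"
      using eN bD by (intro mult_mono) auto
    also have "\<dots> \<le> 6/10000" by simp
    finally show ?thesis .
  qed
  have t2: "\<bar>Re (evalp PP z * cnj (DD z - evalp QQ z))\<bar> \<le> 3/10000"
  proof -
    have "\<bar>Re (evalp PP z * cnj (DD z - evalp QQ z))\<bar> \<le> cmod (evalp PP z) * cmod (DD z - evalp QQ z)"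
      by (metis abs_Re_le_cmod complex_mod_cnj norm_mult)
    also have "\<dots> \<le> 3 * (9 * 8192 / 958003200)"
      using bP eD by (intro mult_mono) auto
    also have "\<dots> \<le> 3/10000" by simp
    finally show ?thesis .
  qed
  have "Re (NN z * cnj (DD z)) = Re (evalp PP z * cnj (evalp QQ z))
      + Re ((NN z - evalp PP z) * cnj (DD z)) + Re (evalp PP z * cnj (DD z - evalp QQ z))"
    unfolding split by simp
  then show "Re (NN z * cnj (DD z)) \<ge> 9/100"
    using crr_lb[OF z] t1 t2 unfolding abs_le_iff by linarith
qed

lemma Re_dphi_circle:
  assumes z: "cmod z = 1"
  shows "Re (dphi z) \<ge> 1/100"
proof -
  note b = circle_bounds[OF z]
  have D0: "DD z \<noteq> 0" using b(1) by auto
  have "dphi z = (NN z * cnj (DD z)) / of_real ((cmod (DD z))^2)"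
    unfolding dphi_def by (metis complex_div_cnj of_real_power)
  then have "Re (dphi z) = Re (NN z * cnj (DD z)) / (cmod (DD z))^2"
    by (simp only: Re_divide_of_real)
  also have "\<dots> \<ge> (9/100) / (5/2)^2"
  proof -
    have c0: "0 < (cmod (DD z))^2" using D0 by simp
    have c1: "(cmod (DD z))^2 \<le> (5/2)^2" using b(2) by (intro power_mono) auto
    show ?thesis using b(1) c0 c1 by (intro frac_le) auto
  qed
  moreover have "(1/100::real) \<le> (9/100)/(5/2)^2" by (simp add: power2_eq_square)
  ultimately show ?thesis by linarith
qed



lemma cos_nonzero:
  assumes "cmod z < 3/2" shows "cos z \<noteq> 0"
proof
  assume "cos z = 0"
  then obtain n::int where n: "z = complex_of_real (n * pi) + of_real pi / 2"
    by (auto simp: cos_eq_0)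
  have "z = complex_of_real ((n + 1/2) * pi)" using n by (simp add: algebra_simps)
  then have "cmod z = \<bar>(n + 1/2) * pi\<bar>" by (simp only: norm_of_real)
  also have "\<dots> = \<bar>n + 1/2\<bar> * pi" by (simp add: abs_mult)
  also have "\<dots> \<ge> 1/2 * pi"
  proof -
    have "\<bar>real_of_int n + 1/2\<bar> \<ge> 1/2"
    proof (cases "n \<ge> 0")
      case True then show ?thesis by simp
    next
      case False then have "real_of_int n \<le> -1" by simp
      then show ?thesis by simp
    qed
    then show ?thesis by (intro mult_right_mono) auto
  qed
  finally have "cmod z \<ge> pi/2" by simp
  then show False using assms pi_gt3 by linarith
qed

lemma phi_deriv:
  assumes "cos z \<noteq> 0"
  shows "(phi_nc has_field_derivative dphi z) (at z)"
proof -
  have "((\<lambda>w. (1+w) / cos w) has_field_derivative ((1 * cos z - (1+z) * (- sin z)) / (cos z * cos z))) (at z)"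
    by (rule DERIV_divide) (auto intro!: derivative_eq_intros assms)
  moreover have "(1 * cos z - (1+z) * (- sin z)) / (cos z * cos z) = dphi z"
    by (simp add: dphi_def NN_def DD_def power2_eq_square)
  ultimately show ?thesis unfolding phi_nc_def[abs_def] by simp
qed

lemma dphi_holo: "dphi holomorphic_on ball 0 (3/2)"
proof -
  have "\<And>z. z \<in> ball 0 (3/2) \<Longrightarrow> DD z \<noteq> 0"
    using cos_nonzero by (simp add: DD_def)
  then show ?thesis
    unfolding dphi_def[abs_def] NN_def[abs_def] DD_def[abs_def]
    by (intro holomorphic_intros) (auto simp: DD_def)
qed

lemma Re_dphi_pos:
  assumes "cmod z \<le> 1" shows "Re (dphi z) \<ge> 1/100"
proof -
  have sub: "cball 0 1 \<subseteq> ball (0::complex) (3/2)" by auto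
  have "norm (exp (- dphi z)) \<le> exp (-1/100)"
  proof (rule maximum_modulus_frontier[where S="cball 0 1" and f="\<lambda>w. exp (- dphi w)" and \<xi>=z])
    show "(\<lambda>w. exp (- dphi w)) holomorphic_on interior (cball 0 1)"
      using dphi_holo sub by (auto intro!: holomorphic_intros intro: holomorphic_on_subset)
    show "continuous_on (closure (cball 0 1)) (\<lambda>w. exp (- dphi w))"
      using dphi_holo sub
      by (auto intro!: continuous_intros intro: holomorphic_on_imp_continuous_on holomorphic_on_subset)
    show "bounded (cball (0::complex) 1)" by simp
    show "z \<in> cball 0 1" using assms by simp
    fix w :: complex assume "w \<in> frontier (cball 0 1)"
    then have "cmod w = 1" by simp
    then have "Re (dphi w) \<ge> 1/100" by (rule Re_dphi_circle)
    then show "norm (exp (- dphi w)) \<le> exp (-1/100)" by (simp add: norm_exp_eq_Re)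
  qed
  then show ?thesis by (simp add: norm_exp_eq_Re)
qed

lemma phi_inj: "inj_on phi_nc (cball 0 1)"
proof (rule inj_onI, rule ccontr)
  fix z1 z2 :: complex
  assume z1: "z1 \<in> cball 0 1" and z2: "z2 \<in> cball 0 1" and eq: "phi_nc z1 = phi_nc z2" and ne: "z1 \<noteq> z2"
  define d where "d = z2 - z1"
  have d0: "d \<noteq> 0" using ne by (simp add: d_def)
  define h where "h t = Re (phi_nc (z1 + of_real t * d) / d)" for t :: real
  have "h 0 < h 1"
  proof (rule DERIV_pos_imp_increasing[where f=h])
    fix t :: real assume t: "0 \<le> t" "t \<le> 1"
    define w where "w = z1 + of_real t * d"
    have "w = (1 - of_real t) * z1 + of_real t * z2" by (simp add: w_def d_def algebra_simps)
    then have "cmod w \<le> (1 - t) * cmod z1 + t * cmod z2"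
      using t by (metis (no_types, lifting) norm_mult norm_of_real norm_triangle_le add_mono abs_of_nonneg diff_ge_0_iff_ge of_real_1 of_real_diff order_refl)
    also have "\<dots> \<le> (1 - t) * 1 + t * 1"
      using z1 z2 t by (intro add_mono mult_left_mono) auto
    finally have wn: "cmod w \<le> 1" by simp
    then have cw: "cos w \<noteq> 0" using cos_nonzero by simp
    have "((\<lambda>s. phi_nc (z1 + s * d) / d) has_field_derivative (dphi (z1 + of_real t * d) * d / d)) (at (of_real t))"
      by (rule DERIV_cdivide, rule DERIV_chain2[OF phi_deriv])
         (use cw in \<open>auto simp: w_def intro!: derivative_eq_intros\<close>)
    then have "((\<lambda>t. phi_nc (z1 + of_real t * d) / d) has_vector_derivative (dphi w)) (at t)"
      using has_vector_derivative_real_field d0 by (fastforce simp: w_def)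
    then have "(h has_field_derivative Re (dphi w)) (at t)"
      unfolding h_def[abs_def] by (rule has_field_derivative_Re)
    moreover have "Re (dphi w) > 0" using Re_dphi_pos[OF wn] by linarith
    ultimately show "\<exists>y. (h has_field_derivative y) (at t) \<and> y > 0" by blast
  qed simp
  moreover have "h 0 = h 1" by (simp add: h_def d_def eq)
  ultimately show False by simp
qed



definition Acf :: "(nat \<Rightarrow> complex) \<Rightarrow> nat \<Rightarrow> complex" where
  "Acf a n = (if n = 0 then 0 else if n = 1 then 1 else a n)"

definition gf :: "(nat \<Rightarrow> complex) \<Rightarrow> complex \<Rightarrow> complex" where
  "gf a z = (\<Sum>n. Acf a (Suc n) * z^n)"

lemma Acf_simps [simp]: "Acf a 0 = 0" "Acf a (Suc 0) = 1" "Acf a (Suc (Suc n)) = a (Suc (Suc n))"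
  by (simp_all add: Acf_def)

context
  fixes f :: "complex \<Rightarrow> complex" and a :: "nat \<Rightarrow> complex"
  assumes fA: "f \<in> classA"
    and ser: "\<And>z. z \<in> ball 0 1 \<Longrightarrow> (\<lambda>n. a (n + 2) * z ^ (n + 2)) sums (f z - z)"
begin

lemma L1: "z \<in> ball 0 1 \<Longrightarrow> (\<lambda>n. Acf a n * z^n) sums f z"
proof -
  assume z: "z \<in> ball 0 1"
  have "(\<lambda>n. Acf a (Suc (Suc n)) * z^(Suc (Suc n))) sums (f z - z)"
    using ser[OF z] by (simp add: numeral_2_eq_2)
  then have "(\<lambda>n. Acf a (Suc n) * z^(Suc n)) sums (f z - z + Acf a (Suc 0) * z^(Suc 0))"
    by (rule sums_Suc_iff[where f="\<lambda>n. Acf a (Suc n) * z^(Suc n)", THEN iffD1])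
  then have "(\<lambda>n. Acf a (Suc n) * z^(Suc n)) sums (f z)" by simp
  then have "(\<lambda>n. Acf a n * z^n) sums (f z + Acf a 0 * z^0)"
    by (rule sums_Suc_iff[where f="\<lambda>n. Acf a n * z^n", THEN iffD1])
  then show ?thesis by simp
qed

lemma L2: "cmod z < 1 \<Longrightarrow> summable (\<lambda>n. Acf a n * z^n)"
  using L1 sums_summable by (simp add: dist_norm) blast

lemma L3: "cmod z < 1 \<Longrightarrow> summable (\<lambda>n. Acf a (Suc n) * z^n)"
proof (cases "z = 0")
  case True then show ?thesis using powser_sums_zero[of "\<lambda>n. Acf a (Suc n)"] sums_summable by blast
next
  case False
  assume z: "cmod z < 1"
  have "summable (\<lambda>n. Acf a (Suc n) * z^(Suc n))"
    using L2[OF z] by (subst summable_Suc_iff)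
  then have "summable (\<lambda>n. Acf a (Suc n) * z^(Suc n) * (1/z))"
    by (rule summable_mult2)
  moreover have "Acf a (Suc n) * z^(Suc n) * (1/z) = Acf a (Suc n) * z^n" for n
    using False by (simp add: field_simps)
  ultimately show ?thesis by simp
qed

lemma L4: "z \<in> ball 0 1 \<Longrightarrow> (\<lambda>n. Acf a (Suc n) * z^n) sums gf a z"
  unfolding gf_def using L3 by (intro summable_sums) simp

lemma L5: "z \<in> ball 0 1 \<Longrightarrow> f z = z * gf a z"
proof -
  assume z: "z \<in> ball 0 1"
  have "(\<lambda>n. Acf a n * z^n) sums (f z + Acf a 0 * z^0)" using L1[OF z] by simp
  then have "(\<lambda>n. Acf a (Suc n) * z^(Suc n)) sums f z"
    by (subst sums_Suc_iff)
  moreover have "(\<lambda>n. z * (Acf a (Suc n) * z^n)) sums (z * gf a z)"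
    using L4[OF z] by (rule sums_mult)
  ultimately show ?thesis by (simp add: sums_unique2 mult_ac)
qed

lemma L6: "gf a 0 = 1"
  unfolding gf_def by (simp only: powser_zero) simp

lemma L7: "z \<in> ball 0 1 \<Longrightarrow> (f has_field_derivative (\<Sum>n. diffs (Acf a) n * z^n)) (at z)"
proof -
  assume z: "z \<in> ball 0 1"
  have "((\<lambda>z. \<Sum>n. Acf a n * z^n) has_field_derivative (\<Sum>n. diffs (Acf a) n * z^n)) (at z)"
    using z by (intro termdiffs_strong'[where K=1] L2) auto
  then show ?thesis
  proof (rule has_field_derivative_transform_within_open[where S="ball 0 1"])
    fix x :: complex assume "x \<in> ball 0 1"
    then show "(\<Sum>n. Acf a n * x^n) = f x" using L1 sums_unique by metis
  qed (use z in auto)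
qed

lemma L8: "z \<in> ball 0 1 \<Longrightarrow> (\<lambda>n. diffs (Acf a) n * z^n) sums deriv f z"
proof -
  assume z: "z \<in> ball 0 1"
  have "summable (\<lambda>n. diffs (Acf a) n * z^n)"
    using z by (intro termdiff_converges[where K=1] L2) auto
  moreover have "deriv f z = (\<Sum>n. diffs (Acf a) n * z^n)"
    using L7[OF z] by (rule DERIV_imp_deriv)
  ultimately show ?thesis by (simp add: summable_sums)
qed

lemma L9: "gf a holomorphic_on ball 0 1"
  unfolding gf_def[abs_def]
proof (subst holomorphic_on_open)
  show "\<forall>x\<in>ball 0 1. \<exists>f'. ((\<lambda>z. \<Sum>n. Acf a (Suc n) * z ^ n) has_field_derivative f') (at x)"
  proof
    fix x :: complex assume "x \<in> ball 0 1"
    then have "((\<lambda>z. \<Sum>n. Acf a (Suc n) * z ^ n) has_field_derivative (\<Sum>n. diffs (\<lambda>n. Acf a (Suc n)) n * x^n)) (at x)"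
      by (intro termdiffs_strong'[where K=1] L3) auto
    then show "\<exists>f'. ((\<lambda>z. \<Sum>n. Acf a (Suc n) * z ^ n) has_field_derivative f') (at x)" by blast
  qed
qed simp

lemma L10:
  assumes z: "z \<in> ball 0 1"
  shows "(\<Sum>n. (c - of_nat (n + 2)) * a (n + 2) * z ^ (n + 1)) = c * gf a z - deriv f z - c + 1"
proof -
  have g: "(\<lambda>n. a (n+2) * z^(n+1)) sums (gf a z - 1)"
  proof -
    have "(\<lambda>n. Acf a (Suc n) * z^n) sums (gf a z - 1 + Acf a (Suc 0) * z^0)"
      using L4[OF z] by simp
    then have "(\<lambda>n. Acf a (Suc (Suc n)) * z^(Suc n)) sums (gf a z - 1)"
      by (subst sums_Suc_iff)
    then show ?thesis by (simp add: numeral_2_eq_2)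
  qed
  have d: "(\<lambda>n. of_nat (n+2) * a (n+2) * z^(n+1)) sums (deriv f z - 1)"
  proof -
    have "(\<lambda>n. diffs (Acf a) n * z^n) sums (deriv f z - 1 + diffs (Acf a) 0 * z^0)"
      using L8[OF z] by (simp add: diffs_def)
    then have "(\<lambda>n. diffs (Acf a) (Suc n) * z^(Suc n)) sums (deriv f z - 1)"
      by (subst sums_Suc_iff)
    then show ?thesis by (simp add: diffs_def numeral_2_eq_2)
  qed
  have "(\<lambda>n. c * (a (n+2) * z^(n+1)) - of_nat (n+2) * a (n+2) * z^(n+1)) sums (c * (gf a z - 1) - (deriv f z - 1))"
    by (intro sums_diff sums_mult g d)
  then have "(\<lambda>n. (c - of_nat (n + 2)) * a (n + 2) * z ^ (n + 1)) sums (c * gf a z - deriv f z - c + 1)"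
    by (simp add: algebra_simps)
  then show ?thesis by (rule sums_unique[symmetric])
qed

end


lemma circle_param:
  assumes "cmod u = 1" shows "\<exists>\<theta>\<in>{-pi..pi}. u = exp (\<i> * of_real \<theta>)"
proof -
  have "u \<noteq> 0" using assms by auto
  then have "u = of_real (norm u) * exp (\<i> * of_real (Arg u))" by (rule Arg_eq)
  then have "u = exp (\<i> * of_real (Arg u))" using assms by simp
  moreover have "Arg u \<in> {-pi..pi}" using mpi_less_Arg[of u] Arg_le_pi[of u] by simp
  ultimately show ?thesis by blast
qed

lemma norm_exp_circle: "cmod (exp (\<i> * of_real \<theta>)) = 1"
  by (simp add: norm_exp_eq_Re)

lemma phi0: "phi_nc 0 = 1" by (simp add: phi_nc_def)

lemma phi_holo: "phi_nc holomorphic_on ball 0 (3/2)"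
proof (subst holomorphic_on_open)
  show "\<forall>x\<in>ball 0 (3/2). \<exists>f'. (phi_nc has_field_derivative f') (at x)"
  proof
    fix x :: complex assume "x \<in> ball 0 (3/2)"
    then have "cos x \<noteq> 0" using cos_nonzero by simp
    then show "\<exists>f'. (phi_nc has_field_derivative f') (at x)" using phi_deriv by blast
  qed
qed simp

lemma phi_ne0: "cmod w < 1 \<Longrightarrow> phi_nc w \<noteq> 0"
proof
  assume w: "cmod w < 1" and "phi_nc w = 0"
  have "cos w \<noteq> 0" using w cos_nonzero by simp
  then have "1 + w = 0" using \<open>phi_nc w = 0\<close> by (simp add: phi_nc_def)
  then have "w = -1" by (simp add: add_eq_0_iff)
  then show False using w by simp
qed

lemma aux_eq: "(S::complex) = c * G - D - c + 1 \<Longrightarrow> (S + c \<noteq> 1) = (c * G \<noteq> D)"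
  by (auto simp: algebra_simps)

theorem mainTheorem15:
  fixes f :: "complex \<Rightarrow> complex" and a :: "nat \<Rightarrow> complex"
  assumes "f \<in> classA"
    and "\<And>z. z \<in> ball 0 1 \<Longrightarrow> (\<lambda>n. a (n + 2) * z ^ (n + 2)) sums (f z - z)"
  shows "f \<in> S_nc \<longleftrightarrow>
    (\<forall>z\<in>ball 0 1. \<forall>\<theta>\<in>{-pi..pi}.
       (\<Sum>n. (phi_nc (exp (\<i> * of_real \<theta>)) - of_nat (n + 2)) * a (n + 2) * z ^ (n + 1))
         + phi_nc (exp (\<i> * of_real \<theta>)) \<noteq> 1)"
proof -
  define g where "g = gf a"
  define q where "q z = deriv f z / g z" for z
  have fhol: "f holomorphic_on ball 0 1" and f0: "f 0 = 0" and df0: "deriv f 0 = 1"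
    using assms(1) by (auto simp: classA_def)
  have fg: "\<And>z. z \<in> ball 0 1 \<Longrightarrow> f z = z * g z" using L5[OF assms] by (simp add: g_def)
  have g0: "g 0 = 1" using L6[OF assms] by (simp add: g_def)
  have ghol: "g holomorphic_on ball 0 1" using L9[OF assms] by (simp add: g_def)
  have dhol: "deriv f holomorphic_on ball 0 1" using fhol by (intro holomorphic_deriv) auto
  have quot: "starlike_quot f z = q z" if "z \<in> ball 0 1" "g z \<noteq> 0" for z
  proof (cases "z = 0")
    case True then show ?thesis by (simp add: starlike_quot_def q_def df0 g0)
  next
    case False then show ?thesis using fg[OF that(1)] that(2) by (simp add: starlike_quot_def q_def)
  qed
  have inj1: "inj_on phi_nc (cball 0 1)" by (rule phi_inj)
  have RHS: "(\<forall>z\<in>ball 0 1. \<forall>\<theta>\<in>{-pi..pi}.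
       (\<Sum>n. (phi_nc (exp (\<i> * of_real \<theta>)) - of_nat (n + 2)) * a (n + 2) * z ^ (n + 1))
         + phi_nc (exp (\<i> * of_real \<theta>)) \<noteq> 1) \<longleftrightarrow>
     (\<forall>z\<in>ball 0 1. \<forall>u. cmod u = 1 \<longrightarrow> phi_nc u * g z \<noteq> deriv f z)"
  proof -
    have E: "(\<Sum>n. (phi_nc (exp (\<i> * of_real \<theta>)) - of_nat (n + 2)) * a (n + 2) * z ^ (n + 1))
         + phi_nc (exp (\<i> * of_real \<theta>)) \<noteq> 1 \<longleftrightarrow> phi_nc (exp (\<i> * of_real \<theta>)) * g z \<noteq> deriv f z"
      if "z \<in> ball 0 1" for z \<theta>
    proof -
      have "(\<Sum>n. (phi_nc (exp (\<i> * of_real \<theta>)) - of_nat (n + 2)) * a (n + 2) * z ^ (n + 1))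
         = phi_nc (exp (\<i> * of_real \<theta>)) * g z - deriv f z - phi_nc (exp (\<i> * of_real \<theta>)) + 1"
        unfolding g_def by (rule L10[OF assms that])
      then show ?thesis by (rule aux_eq)
    qed
    show ?thesis
    proof (intro iffI ballI allI impI)
      fix z u :: complex assume H: "\<forall>z\<in>ball 0 1. \<forall>\<theta>\<in>{-pi..pi}.
       (\<Sum>n. (phi_nc (exp (\<i> * of_real \<theta>)) - of_nat (n + 2)) * a (n + 2) * z ^ (n + 1))
         + phi_nc (exp (\<i> * of_real \<theta>)) \<noteq> 1" and z: "z \<in> ball 0 1" and u: "cmod u = 1"
      obtain \<theta> where th: "\<theta> \<in> {-pi..pi}" "u = exp (\<i> * of_real \<theta>)" using circle_param[OF u] by blast
      show "phi_nc u * g z \<noteq> deriv f z" using H z th E[OF z, of \<theta>] by blast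
    next
      fix z :: complex and \<theta> :: real assume H: "\<forall>z\<in>ball 0 1. \<forall>u. cmod u = 1 \<longrightarrow> phi_nc u * g z \<noteq> deriv f z"
        and z: "z \<in> ball 0 1" and th: "\<theta> \<in> {-pi..pi}"
      show "(\<Sum>n. (phi_nc (exp (\<i> * of_real \<theta>)) - of_nat (n + 2)) * a (n + 2) * z ^ (n + 1))
         + phi_nc (exp (\<i> * of_real \<theta>)) \<noteq> 1"
        using H z E[OF z, of \<theta>] norm_exp_circle[of \<theta>] by blast
    qed
  qed
  show ?thesis
    unfolding RHS
  proof
    assume "f \<in> S_nc"
    then obtain w where wh: "w holomorphic_on ball 0 1" and wb: "w ` ball 0 1 \<subseteq> ball 0 1"
      and w0: "w 0 = 0" and wq: "\<forall>z\<in>ball 0 1. starlike_quot f z = phi_nc (w z)"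
      by (auto simp: S_nc_def subordinate_def)
    show "\<forall>z\<in>ball 0 1. \<forall>u. cmod u = 1 \<longrightarrow> phi_nc u * g z \<noteq> deriv f z"
    proof (intro ballI allI impI notI)
      fix z u assume z: "z \<in> ball 0 1" and u: "cmod u = 1" and eq: "phi_nc u * g z = deriv f z"
      have "w z \<in> ball 0 1" using wb z by blast
      then have wz: "cmod (w z) < 1" by simp
      show False
      proof (cases "z = 0")
        case True
        then have "phi_nc u = phi_nc 0" using eq by (simp add: g0 df0 phi0)
        then have "u = 0" using inj1 u by (auto dest: inj_onD)
        then show False using u by simp
      next
        case False
        show False
        proof (cases "g z = 0")
          case True
          then have "starlike_quot f z = 0" using fg[OF z] False by (simp add: starlike_quot_def)
          then show False using wq z phi_ne0[OF wz] by auto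
        next
          case gz: False
          have "phi_nc (w z) = q z" using wq z quot[OF z gz] by auto
          also have "q z = phi_nc u" using eq gz by (simp add: q_def field_simps)
          finally have "w z = u" using inj1 u wz by (auto dest: inj_onD)
          then show False using u wz by simp
        qed
      qed
    qed
  next
    assume C: "\<forall>z\<in>ball 0 1. \<forall>u. cmod u = 1 \<longrightarrow> phi_nc u * g z \<noteq> deriv f z"
    have phib: "phi_nc holomorphic_on ball 0 1" using phi_holo by (rule holomorphic_on_subset) auto
    have injb: "inj_on phi_nc (ball 0 1)" using inj1 by (rule inj_on_subset) auto
    define Om where "Om = phi_nc ` ball 0 1"
    define K where "K = phi_nc ` cball 0 1"
    have openOm: "open Om" unfolding Om_def by (rule open_mapping_thm3[OF phib]) (auto simp: injb)
    have contphi: "continuous_on (cball 0 1) phi_nc"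
    proof -
      have "cball 0 1 \<subseteq> ball (0::complex) (3/2)" by auto
      then have "phi_nc holomorphic_on cball 0 1" using phi_holo by (rule holomorphic_on_subset[rotated])
      then show ?thesis by (rule holomorphic_on_imp_continuous_on)
    qed
    have compK: "compact K" unfolding K_def
      by (rule compact_continuous_image[OF contphi]) simp
    have OmK: "Om \<subseteq> K" by (auto simp: Om_def K_def)
    obtain M where M: "M > 0" "\<forall>y\<in>K. cmod y \<le> M"
      using compact_imp_bounded[OF compK] by (auto simp: bounded_pos)
    have closedK: "closed K" using compK by (rule compact_imp_closed)
    have notsph: "q z \<in> Om" if H3: "z \<in> ball 0 1" "g z \<noteq> 0" "q z \<in> K" for z
    proof -
      obtain y where y: "cmod y \<le> 1" "q z = phi_nc y" using H3(3) by (auto simp: K_def)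
      show ?thesis
      proof (cases "cmod y = 1")
        case True
        from C H3(1) have "\<forall>u. cmod u = 1 \<longrightarrow> phi_nc u * g z \<noteq> deriv f z" by blast
        then have "phi_nc y * g z \<noteq> deriv f z" using True by blast
        moreover have "phi_nc y * g z = deriv f z" using y H3 by (simp add: q_def field_simps)
        ultimately show ?thesis by simp
      next
        case False then have "y \<in> ball 0 1" using y by auto
        then show ?thesis using y by (auto simp: Om_def)
      qed
    qed
    have dne: "deriv f z \<noteq> 0" if H2: "z \<in> ball 0 1" "g z = 0" for z
    proof -
      from C H2(1) have "\<forall>u. cmod u = 1 \<longrightarrow> phi_nc u * g z \<noteq> deriv f z" by blast
      then have "phi_nc 1 * g z \<noteq> deriv f z" by simp
      then show ?thesis using H2(2) by simp
    qed
    have contg: "continuous_on (ball 0 1) g" using ghol by (rule holomorphic_on_imp_continuous_on)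
    have contd: "continuous_on (ball 0 1) (deriv f)" using dhol by (rule holomorphic_on_imp_continuous_on)
    define U0 where "U0 = ball 0 1 \<inter> g -` (-{0})"
    have openU0: "open U0" unfolding U0_def by (rule continuous_open_preimage[OF contg]) auto
    have contq: "continuous_on U0 q" unfolding q_def[abs_def] U0_def
      by (intro continuous_intros continuous_on_subset[OF contg] continuous_on_subset[OF contd]) auto
    define V where "V = U0 \<inter> q -` Om"
    have openV: "open V" unfolding V_def by (rule continuous_open_preimage[OF contq openU0 openOm])
    define U1 where "U1 = ball 0 1 \<inter> deriv f -` (-{0})"
    have openU1: "open U1" unfolding U1_def by (rule continuous_open_preimage[OF contd]) auto
    have contr: "continuous_on U1 (\<lambda>z. g z / deriv f z)" unfolding U1_def
      by (intro continuous_intros continuous_on_subset[OF contg] continuous_on_subset[OF contd]) auto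
    define W where "W = U1 \<inter> (\<lambda>z. g z / deriv f z) -` ball 0 (1/(M+1))"
    have openW: "open W" unfolding W_def by (rule continuous_open_preimage[OF contr openU1]) auto
    define Ob where "Ob = W \<union> (U0 \<inter> q -` (-K))"
    have openOb: "open Ob"
    proof -
      have "open (U0 \<inter> q -` (-K))"
        using closedK by (intro continuous_open_preimage[OF contq openU0]) auto
      then show ?thesis unfolding Ob_def using openW by auto
    qed
    have VO: "ball 0 1 - V = Ob"
    proof (rule set_eqI, rule iffI)
      fix z assume z: "z \<in> ball 0 1 - V"
      show "z \<in> Ob"
      proof (cases "g z = 0")
        case True
        then have "deriv f z \<noteq> 0" using dne z by auto
        then have "z \<in> W" using z True M by (auto simp: W_def U1_def)
        then show ?thesis by (simp add: Ob_def)
      next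
        case False
        then have zU: "z \<in> U0" using z by (auto simp: U0_def)
        have "q z \<notin> K" using notsph[of z] z False zU by (auto simp: V_def)
        then show ?thesis using zU by (simp add: Ob_def)
      qed
    next
      fix z assume z: "z \<in> Ob"
      have zb: "z \<in> ball 0 1" using z by (auto simp: Ob_def W_def U1_def U0_def)
      have "z \<notin> V"
      proof
        assume zV: "z \<in> V"
        then have gz: "g z \<noteq> 0" and qO: "q z \<in> Om" by (auto simp: V_def U0_def)
        have qK: "q z \<in> K" using qO OmK by auto
        show False
        proof (cases "z \<in> W")
          case True
          then have dz: "deriv f z \<noteq> 0" and sm: "cmod (g z / deriv f z) < 1/(M+1)"
            by (auto simp: W_def U1_def)
          define r where "r = cmod (g z / deriv f z)"
          have r0: "r > 0" using gz dz by (simp add: r_def)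
          have qr: "cmod (q z) * r = 1" using gz dz by (simp add: r_def q_def norm_divide)
          have "r * (M+1) < 1" using sm M by (simp add: r_def less_divide_eq)
          moreover have "cmod (q z) * r \<le> M * r" using M qK r0 by (intro mult_right_mono) auto
          ultimately show False using qr r0 by (simp add: algebra_simps)
        next
          case False then show False using z qK by (auto simp: Ob_def)
        qed
      qed
      then show "z \<in> ball 0 1 - V" using zb by simp
    qed
    have VB: "V = ball 0 1"
    proof -
      have Vsub: "V \<subseteq> ball 0 1" by (auto simp: V_def U0_def)
      have "openin (top_of_set (ball 0 1)) V"
        unfolding openin_open using openV Vsub by blast
      moreover have "closedin (top_of_set (ball 0 1)) V"
        unfolding closedin_closed
      proof (intro exI conjI)
        show "closed (- Ob)" using openOb by auto
        show "V = ball 0 1 \<inter> - Ob" using VO Vsub by blast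
      qed
      moreover have "0 \<in> V"
      proof -
        have "q 0 = phi_nc 0" by (simp add: q_def df0 g0 phi0)
        then show ?thesis by (auto simp: V_def U0_def g0 Om_def)
      qed
      ultimately show ?thesis
        using connected_clopen[THEN iffD1, OF connected_ball[of "0::complex" 1], rule_format, of V] by blast
    qed
    have gq: "g z \<noteq> 0 \<and> q z \<in> Om" if "z \<in> ball 0 1" for z
    proof -
      from that VB have "z \<in> V" by simp
      then show ?thesis unfolding V_def U0_def by simp
    qed
    have gnz: "g z \<noteq> 0" and qOm: "q z \<in> Om" if "z \<in> ball 0 1" for z
      using gq[OF that] by auto
    obtain \<psi> where \<psi>h0: "\<psi> holomorphic_on (phi_nc ` ball 0 1)"
      and "\<And>z. z \<in> ball 0 1 \<Longrightarrow> deriv phi_nc z * deriv \<psi> (phi_nc z) = 1"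
      and \<psi>phi: "\<And>z. z \<in> ball 0 1 \<Longrightarrow> \<psi> (phi_nc z) = z"
      using holomorphic_has_inverse[OF phib open_ball injb] by blast
    have \<psi>h: "\<psi> holomorphic_on Om" using \<psi>h0 by (simp add: Om_def)
    have qhol: "q holomorphic_on ball 0 1"
      unfolding q_def[abs_def] using gnz by (intro holomorphic_on_divide dhol ghol) auto
    define w where "w = \<psi> \<circ> q"
    have whol: "w holomorphic_on ball 0 1"
      unfolding w_def using qOm by (intro holomorphic_on_compose_gen[OF qhol \<psi>h]) auto
    have wprop: "w z \<in> ball 0 1 \<and> phi_nc (w z) = q z" if z: "z \<in> ball 0 1" for z
    proof -
      obtain y where y: "y \<in> ball 0 1" "q z = phi_nc y" using qOm[OF z] by (auto simp: Om_def)
      then have "w z = y" by (simp add: w_def \<psi>phi)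
      then show ?thesis using y by simp
    qed
    have w0: "w 0 = 0"
    proof -
      have "q 0 = phi_nc 0" by (simp add: q_def df0 g0 phi0)
      then show ?thesis by (simp add: w_def \<psi>phi)
    qed
    show "f \<in> S_nc"
      unfolding S_nc_def subordinate_def
    proof (intro CollectI conjI exI[of _ w])
      show "f \<in> classA" by (rule assms(1))
      show "w holomorphic_on ball 0 1" by (rule whol)
      show "w ` ball 0 1 \<subseteq> ball 0 1" using wprop by auto
      show "w 0 = 0" by (rule w0)
      show "\<forall>z\<in>ball 0 1. starlike_quot f z = phi_nc (w z)"
        using wprop quot gnz by auto
    qed
  qed
qed


end
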